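(* Let $X$ be a Banach space, $(A_m)_{m\in\mathbb{Z}}$ a sequence of invertible bounded linear operators on $X$ with $\sup_m\lVert A_m\rVert<\infty$ admitting an exponential dichotomy, and $c>0$ a constant as described in the context (with $B=l^\infty$). Let $f_n\colon X\to X$, $n\in\mathbb{Z}$, be differentiable maps with $\lVert d_xf_n\rVert\le c$ for all $x,n$, $\sup_n\sup_x\lVert f_n(x)\rVert<\infty$, and $\lVert d_xf_n-d_yf_n\rVert\le D\lVert x-y\rVert^r$ for some $D,r>0$ and all $x,y,n$. Put $F_n=A_n+f_n$ and assume there is $N\in\mathbb N$ with $F_{n+N}=F_n$ for all $n\in\mathbb{Z}$. Then there exists $L>0$ such that for every sufficiently small $\varepsilon>0$ and every sequence $\mathbf y=(y_n)_{n\in\mathbb{Z}}\subset X$ with $\sup_{n\in\mathbb{Z}}\lVert y_{n+1}-F_n(y_n)\rVert\le L\varepsilon$ and $y_{n+N}=y_n$ for all $n\in\mathbb{Z}$, there exists a sequence $\mathbf x=(x_n)_{n\in\mathbb{Z}}$ with $x_{n+1}=F_n(x_n)$ for all $n\in\mathbb{Z}$, $\sup_{n\in\mathbb{Z}}\lVert x_n-y_n\rVert\le\varepsilon$, and $x_{n+N}=x_n$ for all $n\in\mathbb{Z}$.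
   Context: $l^\infty$ denotes the space of bounded real sequences indexed by $\mathbb{Z}$ with the sup norm; $X_{l^\infty}$ is the space of bounded sequences $(x_n)_{n\in\mathbb{Z}}\subset X$ with norm $\sup_n\lVert x_n\rVert$. Exponential dichotomy: with $\mathcal A(m,n)=A_{m-1}\cdots A_n$ ($m>n$), $\mathrm{Id}$ ($m=n$), $A_m^{-1}\cdots A_{n-1}^{-1}$ ($m<n$), there exist projections $P_m$ with $P_{m+1}A_m=A_mP_m$ and $C,\lambda>0$ with $\lVert\mathcal A(m,n)P_n\rVert\le Ce^{-\lambda(m-n)}$ ($m\ge n$) and $\lVert\mathcal A(m,n)(\mathrm{Id}-P_n)\rVert\le Ce^{-\lambda(n-m)}$ ($m\le n$). The constant $c>0$ is such that there is $K>0$ for which every sequence $(B_m)$ of bounded operators with $\sup_m\lVert A_m-B_m\rVert\le c$ admits an exponential dichotomy and the operator $(\mathbb B\mathbf x)_n=B_{n-1}x_{n-1}$ on $X_{l^\infty}$ has $\mathrm{Id}-\mathbb B$ invertible with $\lVert(\mathrm{Id}-\mathbb B)^{-1}\rVert\le K$. *)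

theory Defs
  imports "HOL-Analysis.Analysis"
begin

primrec fwd :: "(int \<Rightarrow> 'a::real_normed_vector \<Rightarrow>\<^sub>L 'a) \<Rightarrow> int \<Rightarrow> nat \<Rightarrow> 'a \<Rightarrow> 'a" where
  "fwd A n 0 = id"
| "fwd A n (Suc k) = blinfun_apply (A (n + int k)) \<circ> fwd A n k"

primrec bwd :: "(int \<Rightarrow> 'a::real_normed_vector \<Rightarrow>\<^sub>L 'a) \<Rightarrow> int \<Rightarrow> nat \<Rightarrow> 'a \<Rightarrow> 'a" where
  "bwd A n 0 = id"
| "bwd A n (Suc k) = inv (blinfun_apply (A (n - int k - 1))) \<circ> bwd A n k"

definition cocycle :: "(int \<Rightarrow> 'a::real_normed_vector \<Rightarrow>\<^sub>L 'a) \<Rightarrow> int \<Rightarrow> int \<Rightarrow> 'a \<Rightarrow> 'a" where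
  "cocycle A m n = (if n \<le> m then fwd A n (nat (m - n)) else bwd A n (nat (n - m)))"

text \<open>Exponential dichotomy (the definition presupposes that all operators are invertible,
  since the cocycle uses their inverses). Operator-norm bounds are written pointwise.\<close>
definition exp_dichotomy :: "(int \<Rightarrow> 'a::real_normed_vector \<Rightarrow>\<^sub>L 'a) \<Rightarrow> bool" where
  "exp_dichotomy A \<longleftrightarrow>
     (\<forall>m. bij (blinfun_apply (A m))) \<and>
     (\<exists>(P :: int \<Rightarrow> 'a \<Rightarrow>\<^sub>L 'a) C lam. C > 0 \<and> lam > 0 \<and>
        (\<forall>m. P m o\<^sub>L P m = P m) \<and>
        (\<forall>m. P (m + 1) o\<^sub>L A m = A m o\<^sub>L P m) \<and>
        (\<forall>m n x. n \<le> m \<longrightarrow>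
            norm (cocycle A m n (P n x)) \<le> C * exp (- lam * real_of_int (m - n)) * norm x) \<and>
        (\<forall>m n x. m \<le> n \<longrightarrow>
            norm (cocycle A m n (x - P n x)) \<le> C * exp (- lam * real_of_int (n - m)) * norm x))"

text \<open>The property of the constant c from the context (with B = l^infinity):
  there is K > 0 such that every (B_m) with sup_m ||A_m - B_m|| <= c admits an exponential
  dichotomy, and Id - \<BB> (with (\<BB> x)_n = B_(n-1) x_(n-1)) is invertible on the space of bounded
  X-valued sequences with ||(Id - \<BB>)^-1|| <= K.\<close>
definition admissible_const :: "(int \<Rightarrow> 'a::real_normed_vector \<Rightarrow>\<^sub>L 'a) \<Rightarrow> real \<Rightarrow> bool" where
  "admissible_const A c \<longleftrightarrow>
     (\<exists>K > 0. \<forall>B :: int \<Rightarrow> 'a \<Rightarrow>\<^sub>L 'a. (\<forall>m. norm (A m - B m) \<le> c) \<longrightarrow>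
        exp_dichotomy B \<and>
        (\<forall>z :: int \<Rightarrow> 'a. bounded (range z) \<longrightarrow>
            (\<exists>!x :: int \<Rightarrow> 'a. bounded (range x) \<and> (\<forall>n. x n - B (n - 1) (x (n - 1)) = z n))) \<and>
        (\<forall>x :: int \<Rightarrow> 'a. bounded (range x) \<longrightarrow>
            (SUP n. norm (x n)) \<le> K * (SUP n. norm (x n - B (n - 1) (x (n - 1))))))"

end

theory Submission
  imports Defs
begin

lemma complete_bcontfun_int: "complete (UNIV :: (int \<Rightarrow>\<^sub>C 'a::banach) set)"
proof -
  have "convergent f" if "Cauchy f" for f :: "nat \<Rightarrow> (int \<Rightarrow>\<^sub>C 'a)"
  proof -
    obtain g where "uniform_limit UNIV f g sequentially"
      using uniformly_convergent_eq_cauchy[of "\<lambda>_. True" f] \<open>Cauchy f\<close>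
      unfolding Cauchy_def uniform_limit_sequentially_iff
      by (metis dist_fun_lt_imp_dist_val_lt)
    from uniform_limit_bcontfunE[OF this sequentially_bot]
    obtain l' where "g = apply_bcontfun l'" "(f \<longlonglongrightarrow> l')" by metis
    then show "convergent f"
      by (intro convergentI)
  qed
  then show ?thesis by (meson UNIV_I completeI convergent_def)
qed

lemma sup_bound:
  fixes x w :: "int \<Rightarrow> 'a::real_normed_vector"
  assumes "bounded (range x)" "(SUP n. norm (x n)) \<le> K * (SUP n. norm (w n))"
    "\<And>n. norm (w n) \<le> b" "K > 0"
  shows "norm (x n) \<le> K * b"
proof -
  have "norm (x n) \<le> (SUP n. norm (x n))"
    by (rule cSUP_upper) (auto intro!: bounded_imp_bdd_above simp: bounded_norm_comp assms(1))
  moreover have "(SUP n. norm (w n)) \<le> b" by (rule cSUP_least) (auto intro: assms(3))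
  ultimately show ?thesis using assms(2,4) mult_left_mono[of "(SUP n. norm (w n))" b K] by linarith
qed

lemma R_lip:
  fixes g :: "'a::real_normed_vector \<Rightarrow> 'b::real_normed_vector" and g' :: "'a \<Rightarrow> 'a \<Rightarrow>\<^sub>L 'b"
  assumes der: "\<And>x. (g has_derivative blinfun_apply (g' x)) (at x)"
    and hol: "\<And>x y. norm (g' x - g' y) \<le> D * norm (x - y) powr r"
    and D: "D > 0" and r: "r > 0" and v: "norm v \<le> e" and w: "norm w \<le> e"
  shows "norm ((g (y + w) - g y - g' y w) - (g (y + v) - g y - g' y v)) \<le> norm (w - v) * (D * e powr r)"
proof -
  have e0: "0 \<le> e" using v norm_ge_zero[of v] by linarith
  have "norm ((\<lambda>u. g (y + u)) w - (\<lambda>u. g (y + u)) v - g' (y + 0) (w - v)) \<le> norm (w - v) * (D * e powr r)"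
  proof (rule differentiable_bound_linearization[where S="cball 0 e" and f'="\<lambda>u. blinfun_apply (g' (y + u))"])
    fix t :: real assume t: "t \<in> {0..1}"
    have "v + t *\<^sub>R (w - v) = (1 - t) *\<^sub>R v + t *\<^sub>R w" by (simp add: algebra_simps)
    moreover have "norm ((1 - t) *\<^sub>R v + t *\<^sub>R w) \<le> (1 - t) * e + t * e"
    proof -
      have "norm ((1 - t) *\<^sub>R v + t *\<^sub>R w) \<le> norm ((1 - t) *\<^sub>R v) + norm (t *\<^sub>R w)" by (rule norm_triangle_ineq)
      also have "\<dots> = (1 - t) * norm v + t * norm w" using t by simp
      also have "\<dots> \<le> (1 - t) * e + t * e" using t v w by (intro add_mono mult_left_mono) auto
      finally show ?thesis .
    qed
    ultimately show "v + t *\<^sub>R (w - v) \<in> cball 0 e" by (simp add: algebra_simps)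
  next
    fix x :: 'a assume "x \<in> cball 0 e"
    have "((\<lambda>u. g (y + u)) has_derivative blinfun_apply (g' (y + x))) (at x)"
      using has_derivative_compose[OF has_derivative_add[OF has_derivative_const has_derivative_ident] der[of "y + x"]]
      by (simp add: o_def)
    then show "((\<lambda>u. g (y + u)) has_derivative blinfun_apply (g' (y + x))) (at x within cball 0 e)"
      by (rule has_derivative_at_withinI)
  next
    fix x :: 'a assume x: "x \<in> cball 0 e"
    have "onorm (blinfun_apply (g' (y + x)) - blinfun_apply (g' (y + 0))) = norm (g' (y + x) - g' y)"
      by (simp add: norm_blinfun.rep_eq minus_blinfun.rep_eq fun_diff_def)
    also have "\<dots> \<le> D * norm x powr r" using hol[of "y + x" y] by simp
    also have "\<dots> \<le> D * e powr r" using x D r by (intro mult_left_mono powr_mono2) auto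
    finally show "onorm (blinfun_apply (g' (y + x)) - blinfun_apply (g' (y + 0))) \<le> D * e powr r" .
  qed (simp add: e0)
  moreover have "(g (y + w) - g y - g' y w) - (g (y + v) - g y - g' y v) = (\<lambda>u. g (y + u)) w - (\<lambda>u. g (y + u)) v - g' (y + 0) (w - v)"
    by (simp add: blinfun.diff_right algebra_simps)
  ultimately show ?thesis by (simp only:)
qed


theorem corollary3p6:
  fixes A :: "int \<Rightarrow> 'a::banach \<Rightarrow>\<^sub>L 'a"
    and f :: "int \<Rightarrow> 'a \<Rightarrow> 'a"
    and f' :: "int \<Rightarrow> 'a \<Rightarrow> 'a \<Rightarrow>\<^sub>L 'a"
    and c D r :: real and N :: nat
  assumes inv: "\<forall>m. bij (blinfun_apply (A m))"
    and A_bdd: "bounded (range A)"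
    and dich: "exp_dichotomy A"
    and c_pos: "c > 0"
    and c_adm: "admissible_const A c"
    and f_deriv: "\<forall>n x. (f n has_derivative blinfun_apply (f' n x)) (at x)"
    and f'_bdd: "\<forall>n x. norm (f' n x) \<le> c"
    and f_bdd: "\<exists>M. \<forall>n x. norm (f n x) \<le> M"
    and D_pos: "D > 0" and r_pos: "r > 0"
    and hoelder: "\<forall>n x y. norm (f' n x - f' n y) \<le> D * norm (x - y) powr r"
    and N_pos: "N > 0"
    and periodic: "\<forall>n x. A (n + int N) x + f (n + int N) x = A n x + f n x"
  shows "\<exists>L > 0. \<exists>\<epsilon>0 > 0. \<forall>\<epsilon>. 0 < \<epsilon> \<and> \<epsilon> \<le> \<epsilon>0 \<longrightarrow>
           (\<forall>y :: int \<Rightarrow> 'a.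
              (\<forall>n. norm (y (n + 1) - (A n (y n) + f n (y n))) \<le> L * \<epsilon>) \<and>
              (\<forall>n. y (n + int N) = y n) \<longrightarrow>
              (\<exists>x :: int \<Rightarrow> 'a. (\<forall>n. x (n + 1) = A n (x n) + f n (x n)) \<and>
                  (\<forall>n. norm (x n - y n) \<le> \<epsilon>) \<and>
                  (\<forall>n. x (n + int N) = x n)))"
proof -
  obtain K where K: "K > 0" and KB: "\<And>B :: int \<Rightarrow> 'a \<Rightarrow>\<^sub>L 'a. (\<forall>m. norm (A m - B m) \<le> c) \<Longrightarrow>
        exp_dichotomy B \<and>
        (\<forall>z :: int \<Rightarrow> 'a. bounded (range z) \<longrightarrow>
            (\<exists>!x :: int \<Rightarrow> 'a. bounded (range x) \<and> (\<forall>n. x n - B (n - 1) (x (n - 1)) = z n))) \<and>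
        (\<forall>x :: int \<Rightarrow> 'a. bounded (range x) \<longrightarrow>
            (SUP n. norm (x n)) \<le> K * (SUP n. norm (x n - B (n - 1) (x (n - 1)))))"
    using c_adm unfolding admissible_const_def by blast
  have fper: "f (n + int N) x = A n x + f n x - A (n + int N) x" for n x
    using periodic by (metis add_diff_cancel_left')
  have f'per: "f' (n + int N) x = A n + f' n x - A (n + int N)" for n x
  proof -
    have d1: "((\<lambda>u. A (n + int N) u + f (n + int N) u) has_derivative
        (\<lambda>h. A (n + int N) h + f' (n + int N) x h)) (at x)"
      by (intro has_derivative_add bounded_linear_imp_has_derivative blinfun.bounded_linear_right
          f_deriv[rule_format])
    have d2: "((\<lambda>u. A n u + f n u) has_derivative (\<lambda>h. A n h + f' n x h)) (at x)"
      by (intro has_derivative_add bounded_linear_imp_has_derivative blinfun.bounded_linear_right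
          f_deriv[rule_format])
    have "(\<lambda>u. A (n + int N) u + f (n + int N) u) = (\<lambda>u. A n u + f n u)"
      using periodic by auto
    with d1 d2 have "(\<lambda>h. A (n + int N) h + f' (n + int N) x h) = (\<lambda>h. A n h + f' n x h)"
      using has_derivative_unique by metis
    then have eq: "A (n + int N) h + f' (n + int N) x h = A n h + f' n x h" for h
      by metis
    show ?thesis
    proof (rule blinfun_eqI)
      fix h
      have "f' (n + int N) x h = A n h + f' n x h - A (n + int N) h"
        using eq[of h] by (simp add: algebra_simps)
      then show "f' (n + int N) x h = (A n + f' n x - A (n + int N)) h"
        by (simp add: plus_blinfun.rep_eq minus_blinfun.rep_eq)
    qed
  qed
  define L where "L = 1 / (2 * K)"
  define e0 where "e0 = (1 / (2 * K * D)) powr (1 / r)"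
  have L_pos: "L > 0" using K by (simp add: L_def)
  have e0_pos: "e0 > 0" using K D_pos by (simp add: e0_def)
  have main: "\<forall>\<epsilon>. 0 < \<epsilon> \<and> \<epsilon> \<le> e0 \<longrightarrow>
           (\<forall>y :: int \<Rightarrow> 'a.
              (\<forall>n. norm (y (n + 1) - (A n (y n) + f n (y n))) \<le> L * \<epsilon>) \<and>
              (\<forall>n. y (n + int N) = y n) \<longrightarrow>
              (\<exists>x :: int \<Rightarrow> 'a. (\<forall>n. x (n + 1) = A n (x n) + f n (x n)) \<and>
                  (\<forall>n. norm (x n - y n) \<le> \<epsilon>) \<and>
                  (\<forall>n. x (n + int N) = x n)))"
  proof (intro allI impI)
    fix \<epsilon> :: real and y :: "int \<Rightarrow> 'a"
    assume eps: "0 < \<epsilon> \<and> \<epsilon> \<le> e0"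
    assume hy: "(\<forall>n. norm (y (n + 1) - (A n (y n) + f n (y n))) \<le> L * \<epsilon>) \<and> (\<forall>n. y (n + int N) = y n)"
    have yper: "y (n + int N) = y n" for n using hy by blast
    define \<delta> where "\<delta> = D * \<epsilon> powr r"
    have \<delta>0: "\<delta> \<ge> 0" using D_pos by (simp add: \<delta>_def)
    have K\<delta>: "K * \<delta> \<le> 1/2"
    proof -
      have "\<epsilon> powr r \<le> e0 powr r" using eps r_pos by (intro powr_mono2) auto
      also have "e0 powr r = 1 / (2 * K * D)" using K D_pos r_pos
        by (simp add: e0_def powr_powr)
      finally have "D * \<epsilon> powr r \<le> D * (1 / (2 * K * D))" using D_pos by (intro mult_left_mono) auto
      also have "\<dots> = 1 / (2 * K)" using D_pos by simp
      finally have "\<delta> \<le> 1 / (2 * K)" by (simp add: \<delta>_def)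
      then show ?thesis using K by (simp add: field_simps)
    qed
    have KL: "K * L = 1/2" using K by (simp add: L_def)
    define B where "B n = A n + f' n (y n)" for n
    have Bc: "\<forall>m. norm (A m - B m) \<le> c" using f'_bdd by (simp add: B_def)
    note KB' = KB[OF Bc]
    have Bex: "\<And>z. bounded (range z) \<Longrightarrow>
        (\<exists>!x :: int \<Rightarrow> 'a. bounded (range x) \<and> (\<forall>n. x n - B (n - 1) (x (n - 1)) = z n))"
      using KB' by blast
    have Bsup: "\<And>x. bounded (range x) \<Longrightarrow>
            (SUP n. norm (x n)) \<le> K * (SUP n. norm (x n - B (n - 1) (x (n - 1))))"
      using KB' by blast
    have Bper: "B (n + int N) = B n" for n
      by (simp add: B_def f'per yper)
    define e where "e m = A m (y m) + f m (y m) - y (m + 1)" for m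
    have e_bd: "norm (e m) \<le> L * \<epsilon>" for m
      using hy by (simp add: e_def norm_minus_commute)
    have eper: "e (m + int N) = e m" for m
    proof -
      have "y (m + int N + 1) = y (m + 1)" using yper[of "m + 1"] by (simp add: algebra_simps)
      then show ?thesis using periodic yper by (simp add: e_def)
    qed
    define R where "R m w = f m (y m + w) - f m (y m) - f' m (y m) w" for m w
    have Rper: "R (m + int N) w = R m w" for m w
      by (simp add: R_def fper f'per yper blinfun.add_left blinfun.diff_left blinfun.add_right algebra_simps)
    have Rlip: "norm (R m w - R m v) \<le> norm (w - v) * \<delta>" if "norm v \<le> \<epsilon>" "norm w \<le> \<epsilon>" for m v w
      unfolding R_def \<delta>_def
      by (rule R_lip[OF _ _ D_pos r_pos that]) (use f_deriv hoelder in auto)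
    have R0: "R m 0 = 0" for m by (simp add: R_def)
    have Rbd: "norm (R m w) \<le> \<epsilon> * \<delta>" if "norm w \<le> \<epsilon>" for m w
      using Rlip[of 0 w m] that eps \<delta>0 mult_right_mono[OF that \<delta>0] by (simp add: R0)
    define g where "g z n = e (n - 1) + R (n - 1) (z (n - 1))" for z :: "int \<Rightarrow> 'a" and n
    have gbd: "norm (g z n) \<le> L * \<epsilon> + \<epsilon> * \<delta>" if "\<And>n. norm (z n) \<le> \<epsilon>" for z n
      unfolding g_def using norm_triangle_ineq[of "e (n - 1)" "R (n - 1) (z (n - 1))"]
        e_bd[of "n - 1"] Rbd[OF that[of "n - 1"], of "n - 1"] by linarith
    have gbdd: "bounded (range (g z))" if "\<And>n. norm (z n) \<le> \<epsilon>" for z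
      unfolding bounded_iff using gbd[of z, OF that] by blast
    have glip: "norm (g z n - g w n) \<le> b * \<delta>"
      if "\<And>n. norm (z n) \<le> \<epsilon>" "\<And>n. norm (w n) \<le> \<epsilon>" "\<And>n. norm (z n - w n) \<le> b" for z w b n
    proof -
      have "norm (g z n - g w n) = norm (R (n - 1) (z (n - 1)) - R (n - 1) (w (n - 1)))"
        by (simp add: g_def)
      also have "\<dots> \<le> norm (z (n - 1) - w (n - 1)) * \<delta>" by (rule Rlip[OF that(2) that(1)])
      also have "\<dots> \<le> b * \<delta>" by (rule mult_right_mono[OF that(3) \<delta>0])
      finally show ?thesis .
    qed
    define sol where "sol w = (THE x. bounded (range x) \<and> (\<forall>n. x n - B (n - 1) (x (n - 1)) = w n))"
      for w :: "int \<Rightarrow> 'a"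
    have sol: "bounded (range (sol w)) \<and> (\<forall>n. sol w n - B (n - 1) (sol w (n - 1)) = w n)"
      if "bounded (range w)" for w
      unfolding sol_def by (rule theI'[OF Bex[OF that]])
    have solI: "sol w = x" if "bounded (range w)" "bounded (range x)"
      "\<And>n. x n - B (n - 1) (x (n - 1)) = w n" for w x
      unfolding sol_def using Bex[OF that(1)] that(2,3) by (intro the1_equality) auto
    have est: "norm (x n) \<le> K * b" if "bounded (range x)"
      "\<And>n. norm (x n - B (n - 1) (x (n - 1))) \<le> b" for x b n
      by (rule sup_bound[OF that(1) Bsup[OF that(1)] that(2) K])
    have Kb: "K * (L * \<epsilon> + \<epsilon> * \<delta>) \<le> \<epsilon>"
    proof -
      have "K * (L * \<epsilon> + \<epsilon> * \<delta>) = (K * L) * \<epsilon> + (K * \<delta>) * \<epsilon>" by (simp add: algebra_simps)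
      also have "\<dots> \<le> 1/2 * \<epsilon> + 1/2 * \<epsilon>" using KL K\<delta> eps by (intro add_mono mult_right_mono) auto
      finally show ?thesis by simp
    qed
    define S where "S = cball (0 :: int \<Rightarrow>\<^sub>C 'a) \<epsilon>"
    have S_iff: "z \<in> S \<longleftrightarrow> (\<forall>n. norm (apply_bcontfun z n) \<le> \<epsilon>)" for z
    proof
      assume "z \<in> S" then have "norm z \<le> \<epsilon>" by (simp add: S_def)
      then show "\<forall>n. norm (apply_bcontfun z n) \<le> \<epsilon>" using norm_bounded order_trans by blast
    next
      assume "\<forall>n. norm (apply_bcontfun z n) \<le> \<epsilon>"
      then have "norm z \<le> \<epsilon>" by (intro norm_bound) auto
      then show "z \<in> S" by (simp add: S_def)
    qed
    have solS: "bounded (range (sol (g z))) \<and> (\<forall>n. norm (sol (g z) n) \<le> \<epsilon>)" if "\<And>n. norm (z n) \<le> \<epsilon>" for z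
    proof -
      have s: "bounded (range (sol (g z)))" "\<And>n. sol (g z) n - B (n - 1) (sol (g z) (n - 1)) = g z n"
        using sol[OF gbdd[of z, OF that]] by auto
      have "norm (sol (g z) n) \<le> \<epsilon>" for n
        using est[OF s(1), of "L * \<epsilon> + \<epsilon> * \<delta>" n] gbd[of z, OF that] s(2) Kb by auto
      with s show ?thesis by blast
    qed
    have solB: "sol (g z) \<in> bcontfun" if "\<And>n. norm (z n) \<le> \<epsilon>" for z
      using solS[of z, OF that] by (intro bcontfun_normI) auto
    define T where "T z = Bcontfun (sol (g (apply_bcontfun z)))" for z :: "int \<Rightarrow>\<^sub>C 'a"
    have Tapp: "apply_bcontfun (T z) = sol (g (apply_bcontfun z))" if "z \<in> S" for z
      unfolding T_def using solB that S_iff by (simp add: Bcontfun_inverse)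
    have TS: "T ` S \<subseteq> S"
    proof
      fix w assume "w \<in> T ` S"
      then obtain z where z: "z \<in> S" "w = T z" by blast
      show "w \<in> S" unfolding S_iff z(2) Tapp[OF z(1)] using solS z(1) S_iff by blast
    qed
    have Tlip: "dist (T z) (T w) \<le> 1/2 * dist z w" if "z \<in> S" "w \<in> S" for z w
    proof (rule dist_bound)
      fix n
      have zb: "\<And>n. norm (apply_bcontfun z n) \<le> \<epsilon>" and wb: "\<And>n. norm (apply_bcontfun w n) \<le> \<epsilon>"
        using that S_iff by auto
      define d where "d = (\<lambda>n. sol (g z) n - sol (g w) n)"
      have sz: "\<And>n. sol (g z) n - B (n - 1) (sol (g z) (n - 1)) = g z n"
        using sol[OF gbdd[of "apply_bcontfun z", OF zb]] by auto
      have sw: "\<And>n. sol (g w) n - B (n - 1) (sol (g w) (n - 1)) = g w n"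
        using sol[OF gbdd[of "apply_bcontfun w", OF wb]] by auto
      have dbd: "bounded (range d)"
      proof -
        have "norm (d n) \<le> \<epsilon> + \<epsilon>" for n
          unfolding d_def using solS[of "apply_bcontfun z", OF zb] solS[of "apply_bcontfun w", OF wb] norm_triangle_ineq4[of "sol (g z) n" "sol (g w) n"]
          by (meson add_mono order_trans)
        then show ?thesis unfolding bounded_iff by blast
      qed
      have deq: "d n - B (n - 1) (d (n - 1)) = g z n - g w n" for n
        using sz[of n] sw[of n] by (simp add: d_def blinfun.diff_right algebra_simps)
      have "norm (d n - B (n - 1) (d (n - 1))) \<le> dist z w * \<delta>" for n
        unfolding deq
        by (rule glip[of "apply_bcontfun z" "apply_bcontfun w", OF zb wb]) (metis dist_bounded dist_norm)
      then have "norm (d n) \<le> K * (dist z w * \<delta>)" by (rule est[OF dbd])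
      also have "\<dots> = (K * \<delta>) * dist z w" by simp
      also have "\<dots> \<le> 1/2 * dist z w" using K\<delta> by (intro mult_right_mono) auto
      finally show "dist (apply_bcontfun (T z) n) (apply_bcontfun (T w) n) \<le> 1/2 * dist z w"
        by (simp add: Tapp[OF that(1)] Tapp[OF that(2)] dist_norm d_def)
    qed
    have "\<exists>!z\<in>S. T z = z"
    proof (rule Banach_fix[OF _ _ _ _ TS Tlip])
      show "complete S" unfolding S_def by (rule complete_closed_subset[OF closed_cball subset_UNIV complete_bcontfun_int])
      show "S \<noteq> {}" using eps unfolding S_def by (metis centre_in_cball empty_iff less_eq_real_def)
    qed auto
    then obtain z where zS: "z \<in> S" and zfix: "T z = z" and zuniq: "\<And>z'. z' \<in> S \<Longrightarrow> T z' = z' \<Longrightarrow> z' = z"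
      by blast
    define zf where "zf = apply_bcontfun z"
    have zfb: "\<And>n. norm (zf n) \<le> \<epsilon>" using zS S_iff zf_def by auto
    have zfsol: "sol (g zf) = zf" using Tapp[OF zS] zfix zf_def by simp
    have zeq: "zf n - B (n - 1) (zf (n - 1)) = g zf n" for n
      using sol[OF gbdd[of zf, OF zfb]] zfsol by auto
    define zs where "zs = (\<lambda>n. zf (n + int N))"
    have zsb: "\<And>n. norm (zs n) \<le> \<epsilon>" using zfb zs_def by auto
    have zsB: "zs \<in> bcontfun" using zsb by (intro bcontfun_normI) auto
    have zsS: "Bcontfun zs \<in> S" using zsB zsb S_iff by (simp add: Bcontfun_inverse)
    have "sol (g zs) = zs"
    proof (rule solI[OF gbdd[of zs, OF zsb]])
      show "bounded (range zs)" using zsb unfolding bounded_iff by blast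
      fix n
      have "zf (n + int N) - B (n + int N - 1) (zf (n + int N - 1)) = g zf (n + int N)" by (rule zeq)
      moreover have "n + int N - 1 = (n - 1) + int N" by simp
      ultimately show "zs n - B (n - 1) (zs (n - 1)) = g zs n"
        by (simp add: zs_def g_def Bper eper Rper)
    qed
    then have "T (Bcontfun zs) = Bcontfun zs" using Tapp[OF zsS] zsB
      by (metis Bcontfun_inverse apply_bcontfun_inverse)
    then have "Bcontfun zs = z" using zuniq zsS by blast
    then have zper: "zf (n + int N) = zf n" for n
      using zsB zs_def zf_def by (metis Bcontfun_inverse)
    show "\<exists>x :: int \<Rightarrow> 'a. (\<forall>n. x (n + 1) = A n (x n) + f n (x n)) \<and>
                  (\<forall>n. norm (x n - y n) \<le> \<epsilon>) \<and> (\<forall>n. x (n + int N) = x n)"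
    proof (intro exI[of _ "\<lambda>n. y n + zf n"] conjI allI)
      fix n
      have "zf (n + 1) - B n (zf n) = g zf (n + 1)" using zeq[of "n + 1"] by simp
      then show "y (n + 1) + zf (n + 1) = A n (y n + zf n) + f n (y n + zf n)"
        by (simp add: g_def e_def R_def B_def blinfun.add_left blinfun.add_right algebra_simps)
    next
      fix n show "norm (y n + zf n - y n) \<le> \<epsilon>" using zfb by simp
    next
      fix n show "y (n + int N) + zf (n + int N) = y n + zf n" using yper zper by simp
    qed
  qed
  show ?thesis using main L_pos e0_pos by blast
qed
end
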